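(* Let $p$ be an odd prime and $\mathbf{k}=(k_1,k_2)$ with $k_1>k_2>0$. Let $a,c$ be positive integers with $0<k_1c\le p-1$ and $a+(k_1-1)c<p-1$. Then $$(a,\;p-1-(a+(k_1-1)c),\;(k_1-k_2+1)c-1,\;c)\in\mathcal{A}_{\mathbf{k}}.$$
   Context: Define, for integers $a,b_1,b_2,c$, the formal expression $$R_{\mathbf{k}}(a,b_1,b_2,c)=(-1)^{k_1+k_2}\prod_{i=1}^{k_1-k_2}\frac{(b_1+(i-1)c)!}{(1+a+b_1+(i+k_1-2)c-p)!}\prod_{i=1}^{k_2}\frac{(b_2+(i-1)c)!}{(1+b_2+(i+k_2-k_1-2)c)!}\cdot\frac{(1+b_1+b_2+(i-2)c)!}{(2+a+b_1+b_2+(i+k_1-3)c-p)!}$$ $$\times\prod_{i=1}^{k_1}(a+(i-1)c)!\prod_{i=1}^{k_2}(p+(i-k_1-1)c)!\prod_{r=1}^2\prod_{i=1}^{k_r}\frac{(ic)!}{c!}.$$ $\mathcal{A}_{\mathbf{k}}$ is the set of $(a,b_1,b_2,c)\in\mathbb{Z}_{>0}^4$ with $a+(k_1-1)c<p-1$ such that every factorial $x!$ appearing in this expression satisfies $0\le x<p$. *)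

theory Defs
  imports "HOL-Computational_Algebra.Primes"
begin

text \<open>The multiset of arguments x of all factorials x! occurring in the expression
  R_k(a,b1,b2,c) (numerators and denominators), for k = (k1,k2), as integers.\<close>
definition fact_args :: "int \<Rightarrow> nat \<Rightarrow> nat \<Rightarrow> int \<Rightarrow> int \<Rightarrow> int \<Rightarrow> int \<Rightarrow> int set" where
  "fact_args p k1 k2 a b1 b2 c =
     (\<Union>i\<in>{1..int k1 - int k2}. {b1 + (i-1)*c, 1 + a + b1 + (i + int k1 - 2)*c - p})
   \<union> (\<Union>i\<in>{1..int k2}. {b2 + (i-1)*c, 1 + b2 + (i + int k2 - int k1 - 2)*c,
                           1 + b1 + b2 + (i-2)*c, 2 + a + b1 + b2 + (i + int k1 - 3)*c - p})
   \<union> (\<lambda>i. a + (i-1)*c) ` {1..int k1}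
   \<union> (\<lambda>i. p + (i - int k1 - 1)*c) ` {1..int k2}
   \<union> (\<Union>r\<in>{k1,k2}. (\<Union>i\<in>{1..int r}. {i*c, c}))"

definition A_set :: "int \<Rightarrow> nat \<Rightarrow> nat \<Rightarrow> (int \<times> int \<times> int \<times> int) set" where
  "A_set p k1 k2 = {(a,b1,b2,c). a > 0 \<and> b1 > 0 \<and> b2 > 0 \<and> c > 0 \<and>
      a + (int k1 - 1)*c < p - 1 \<and>
      (\<forall>x\<in>fact_args p k1 k2 a b1 b2 c. 0 \<le> x \<and> x < p)}"

end

theory Submission
  imports Defs
begin

lemma mc_bounds:
  fixes m n c :: int
  assumes "0 \<le> m" "m \<le> n" "c > 0"
  shows "0 \<le> m * c" "m * c \<le> n * c"
  using assms by (simp_all add: mult_right_mono)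

lemmas dd = left_diff_distrib distrib_right mult_1_left

theorem lemma5p5:
  fixes p a c :: int and k1 k2 :: nat
  assumes "prime p" and "odd p"
    and "k1 > k2" and "k2 > 0"
    and "a > 0" and "c > 0"
    and "0 < int k1 * c" and "int k1 * c \<le> p - 1"
    and "a + (int k1 - 1) * c < p - 1"
  shows "(a, p - 1 - (a + (int k1 - 1) * c), (int k1 - int k2 + 1) * c - 1, c) \<in> A_set p k1 k2"
proof -
  define K1 where "K1 = int k1"
  define K2 where "K2 = int k2"
  have K: "K1 > K2" "K2 > 0" using assms(3,4) by (auto simp: K1_def K2_def)
  have c: "c > 0" by fact
  have h1: "K1 * c \<le> p - 1" "a + (K1 - 1) * c < p - 1" using assms(8,9) by (auto simp: K1_def)
  have B: "\<And>m n. 0 \<le> m \<Longrightarrow> m \<le> n \<Longrightarrow> 0 \<le> m * c \<and> m * c \<le> n * c"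
    using mc_bounds c by blast
  have b2pos: "(K1 - K2 + 1) * c - 1 > 0"
  proof -
    have "2 * c \<le> (K1 - K2 + 1) * c" using K c by (intro mult_right_mono) auto
    then show ?thesis using c by linarith
  qed
  have "\<forall>x\<in>fact_args p k1 k2 a (p - 1 - (a + (K1 - 1) * c)) ((K1 - K2 + 1) * c - 1) c. 0 \<le> x \<and> x < p"
  proof
    fix x assume "x \<in> fact_args p k1 k2 a (p - 1 - (a + (K1 - 1) * c)) ((K1 - K2 + 1) * c - 1) c"
    then consider
      (p1) i where "1 \<le> i" "i \<le> K1 - K2" "x = p - 1 - (a + (K1 - 1) * c) + (i - 1) * c"
    | (p2) i where "1 \<le> i" "i \<le> K1 - K2" "x = (i - 1) * c"
    | (p3) i where "1 \<le> i" "i \<le> K2" "x = (K1 - K2 + i) * c - 1"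
    | (p4) i where "1 \<le> i" "i \<le> K2" "x = (i - 1) * c"
    | (p5) i where "1 \<le> i" "i \<le> K2" "x = p - 1 - a - (K2 - i) * c"
    | (p6) i where "1 \<le> i" "i \<le> K2" "x = (i + K1 - K2 - 1) * c"
    | (p7) i where "1 \<le> i" "i \<le> K1" "x = a + (i - 1) * c"
    | (p8) i where "1 \<le> i" "i \<le> K2" "x = p - (K1 + 1 - i) * c"
    | (p9) i where "1 \<le> i" "i \<le> K1" "x = i * c"
    | (p10) "x = c"
      unfolding fact_args_def K1_def[symmetric] K2_def[symmetric]
      using K
      by (auto simp: algebra_simps K1_def[symmetric] K2_def[symmetric])
    then show "0 \<le> x \<and> x < p"
    proof cases
      case p1
      have "(i - 1) * c \<le> (K1 - 1) * c" "0 \<le> (i - 1) * c" using B[of "i - 1" "K1 - 1"] p1 K by auto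
      then show ?thesis using p1 h1 assms(5) by linarith
    next
      case p2
      have F: "0 \<le> (i - 1) * c \<and> (i - 1) * c \<le> (K1) * c" using B[of "i - 1" "K1"] p2 K by auto
      show ?thesis using F[unfolded dd] p2[unfolded dd] h1[unfolded dd] K c assms(5) by linarith
    next
      case p3
      have F: "0 \<le> (K1 - K2 + i) * c \<and> (K1 - K2 + i) * c \<le> (K1) * c" using B[of "K1 - K2 + i" "K1"] p3 K by auto
      have G: "1 * c \<le> (K1 - K2 + i) * c" using B[of 1 "K1 - K2 + i"] p3 K by auto
      show ?thesis using F[unfolded dd] G[unfolded dd] p3[unfolded dd] h1[unfolded dd] K c assms(5) by linarith
    next
      case p4
      have F: "0 \<le> (i - 1) * c \<and> (i - 1) * c \<le> (K1) * c" using B[of "i - 1" "K1"] p4 K by auto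
      show ?thesis using F[unfolded dd] p4[unfolded dd] h1[unfolded dd] K c assms(5) by linarith
    next
      case p5
      have F: "0 \<le> (K2 - i) * c \<and> (K2 - i) * c \<le> (K1 - 1) * c" using B[of "K2 - i" "K1 - 1"] p5 K by auto
      show ?thesis using F[unfolded dd] p5[unfolded dd] h1[unfolded dd] K c assms(5) by linarith
    next
      case p6
      have F: "0 \<le> (i + K1 - K2 - 1) * c \<and> (i + K1 - K2 - 1) * c \<le> (K1) * c" using B[of "i + K1 - K2 - 1" "K1"] p6 K by auto
      show ?thesis using F[unfolded dd] p6[unfolded dd] h1[unfolded dd] K c assms(5) by linarith
    next
      case p7
      have F: "0 \<le> (i - 1) * c \<and> (i - 1) * c \<le> (K1 - 1) * c" using B[of "i - 1" "K1 - 1"] p7 K by auto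
      show ?thesis using F[unfolded dd] p7[unfolded dd] h1[unfolded dd] K c assms(5) by linarith
    next
      case p8
      have F: "0 \<le> (K1 + 1 - i) * c \<and> (K1 + 1 - i) * c \<le> (K1) * c" using B[of "K1 + 1 - i" "K1"] p8 K by auto
      have G: "0 \<le> (1) * c \<and> (1) * c \<le> (K1 + 1 - i) * c" using B[of "1" "K1 + 1 - i"] p8 K by auto
      show ?thesis using F[unfolded dd] G[unfolded dd] p8[unfolded dd] h1[unfolded dd] K c assms(5) by linarith
    next
      case p9
      have F: "0 \<le> (i) * c \<and> (i) * c \<le> (K1) * c" using B[of "i" "K1"] p9 K by auto
      show ?thesis using F[unfolded dd] p9[unfolded dd] h1[unfolded dd] K c assms(5) by linarith
    next
      case p10
      have F: "0 \<le> (1) * c \<and> (1) * c \<le> (K1) * c" using B[of "1" "K1"] p10 K by auto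
      show ?thesis using F[unfolded dd] p10[unfolded dd] h1[unfolded dd] K c assms(5) by linarith
    qed
  qed
  then show ?thesis
    unfolding A_set_def using assms b2pos h1 by (auto simp: K1_def K2_def)
qed

end
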